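(* Let $k\ge1$, let $(A,t)$ be a $\mathcal{C}_k$-algebra and let $K(A)=\{x\in A: t(x)=x=\nabla x\}$. Then: (a) $K(A)$ is a subalgebra of the $mpM$-algebra $A$ (closed under $\wedge,\vee,\sim,{}^\ast,0,1$); (b) $K(A)$ is a Boolean algebra; (c) if $(S,t_S)$ is a $\mathcal{C}_k$-subalgebra of $(A,t)$, then $K(S)=K(A)\cap S$; (d) for $a\in A$, the principal lattice filter $[a)$ is a $c$-filter if and only if $a\in K(A)$; (e) if $a\in K(A)$, then $D(a)=[a)$.
   Context: A modal pseudocomplemented De Morgan algebra ($mpM$-algebra) is an algebra $\langle A,\wedge,\vee,\sim,{}^\ast,0,1\rangle$ such that $\langle A,\wedge,\vee,\sim,0,1\rangle$ is a De Morgan algebra (bounded distributive lattice with $\sim\sim x=x$, $\sim(x\vee y)=\sim x\wedge\sim y$), $x^\ast$ is the pseudocomplement of $x$, and $x\vee\sim x\le x\vee x^\ast$. Put $\nabla x=\sim(\sim x\wedge x^\ast)$, $\triangle x=\sim\nabla\sim x$. A $\mathcal{C}_k$-algebra ($k\ge1$) is a pair $(A,t)$ with $A$ an $mpM$-algebra and $t$ an $mpM$-automorphism of $A$ with $t^k=\mathrm{id}$. A $c$-filter is a lattice filter $F$ with $x\in F\Rightarrow\triangle x\in F$ and $t(x)\in F$. The cyclic implication is $a\rightharpoondown b=\bigvee_{i=1}^{k}\nabla(\sim t^i(a))\vee b$; a cyclic deductive system is a set $D\ni 1$ such that $x,\,x\rightharpoondown y\in D$ imply $y\in D$; $D(a)$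 is the smallest cyclic deductive system containing $a$. *)

theory Defs
  imports Main
begin

text \<open>An algebra of type (2,2,1,1,0,0): carrier with meet, join, De Morgan negation,
pseudocomplement, bottom and top.\<close>
record 'a mpm =
  carrier :: "'a set"
  meet :: "'a \<Rightarrow> 'a \<Rightarrow> 'a"
  join :: "'a \<Rightarrow> 'a \<Rightarrow> 'a"
  neg  :: "'a \<Rightarrow> 'a"
  pc   :: "'a \<Rightarrow> 'a"
  zero :: 'a
  one  :: 'a

definition le :: "'a mpm \<Rightarrow> 'a \<Rightarrow> 'a \<Rightarrow> bool" where
  "le M x y \<longleftrightarrow> meet M x y = x"

definition bdl :: "'a mpm \<Rightarrow> bool" where
  "bdl M \<longleftrightarrow>
     zero M \<in> carrier M \<and> one M \<in> carrier M \<and>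
     (\<forall>x\<in>carrier M. \<forall>y\<in>carrier M. meet M x y \<in> carrier M \<and> join M x y \<in> carrier M) \<and>
     (\<forall>x\<in>carrier M. \<forall>y\<in>carrier M. meet M x y = meet M y x \<and> join M x y = join M y x) \<and>
     (\<forall>x\<in>carrier M. \<forall>y\<in>carrier M. \<forall>z\<in>carrier M.
        meet M (meet M x y) z = meet M x (meet M y z) \<and>
        join M (join M x y) z = join M x (join M y z)) \<and>
     (\<forall>x\<in>carrier M. \<forall>y\<in>carrier M.
        meet M x (join M x y) = x \<and> join M x (meet M x y) = x) \<and>
     (\<forall>x\<in>carrier M. \<forall>y\<in>carrier M. \<forall>z\<in>carrier M.
        meet M x (join M y z) = join M (meet M x y) (meet M x z)) \<and>
     (\<forall>x\<in>carrier M. meet M x (zero M) = zero M \<and> join M x (one M) = one M)"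

definition boolean_alg :: "'a mpm \<Rightarrow> bool" where
  "boolean_alg M \<longleftrightarrow> bdl M \<and>
     (\<forall>x\<in>carrier M. \<exists>y\<in>carrier M. meet M x y = zero M \<and> join M x y = one M)"

definition demorgan_alg :: "'a mpm \<Rightarrow> bool" where
  "demorgan_alg M \<longleftrightarrow> bdl M \<and>
     (\<forall>x\<in>carrier M. neg M x \<in> carrier M \<and> neg M (neg M x) = x) \<and>
     (\<forall>x\<in>carrier M. \<forall>y\<in>carrier M. neg M (join M x y) = meet M (neg M x) (neg M y))"

definition mpm_alg :: "'a mpm \<Rightarrow> bool" where
  "mpm_alg M \<longleftrightarrow> demorgan_alg M \<and>
     (\<forall>x\<in>carrier M. pc M x \<in> carrier M \<and> meet M x (pc M x) = zero M \<and>
        (\<forall>y\<in>carrier M. meet M x y = zero M \<longrightarrow> le M y (pc M x))) \<and>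
     (\<forall>x\<in>carrier M. le M (join M x (neg M x)) (join M x (pc M x)))"

definition nabla :: "'a mpm \<Rightarrow> 'a \<Rightarrow> 'a" where
  "nabla M x = neg M (meet M (neg M x) (pc M x))"

definition triangle :: "'a mpm \<Rightarrow> 'a \<Rightarrow> 'a" where
  "triangle M x = neg M (nabla M (neg M x))"

definition mpm_aut :: "'a mpm \<Rightarrow> ('a \<Rightarrow> 'a) \<Rightarrow> bool" where
  "mpm_aut M t \<longleftrightarrow> bij_betw t (carrier M) (carrier M) \<and>
     (\<forall>x\<in>carrier M. \<forall>y\<in>carrier M.
        t (meet M x y) = meet M (t x) (t y) \<and> t (join M x y) = join M (t x) (t y)) \<and>
     (\<forall>x\<in>carrier M. t (neg M x) = neg M (t x) \<and> t (pc M x) = pc M (t x)) \<and>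
     t (zero M) = zero M \<and> t (one M) = one M"

definition ck_alg :: "nat \<Rightarrow> 'a mpm \<Rightarrow> ('a \<Rightarrow> 'a) \<Rightarrow> bool" where
  "ck_alg k M t \<longleftrightarrow> k \<ge> 1 \<and> mpm_alg M \<and> mpm_aut M t \<and>
     (\<forall>x\<in>carrier M. (t ^^ k) x = x)"

definition Kset :: "'a mpm \<Rightarrow> ('a \<Rightarrow> 'a) \<Rightarrow> 'a set" where
  "Kset M t = {x \<in> carrier M. t x = x \<and> x = nabla M x}"

definition mpm_subalg :: "'a mpm \<Rightarrow> 'a set \<Rightarrow> bool" where
  "mpm_subalg M S \<longleftrightarrow> S \<subseteq> carrier M \<and> zero M \<in> S \<and> one M \<in> S \<and>
     (\<forall>x\<in>S. \<forall>y\<in>S. meet M x y \<in> S \<and> join M x y \<in> S) \<and>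
     (\<forall>x\<in>S. neg M x \<in> S \<and> pc M x \<in> S)"

definition ck_subalg :: "nat \<Rightarrow> 'a mpm \<Rightarrow> ('a \<Rightarrow> 'a) \<Rightarrow> 'a set \<Rightarrow> ('a \<Rightarrow> 'a) \<Rightarrow> bool" where
  "ck_subalg k M t S ts \<longleftrightarrow> mpm_subalg M S \<and> (\<forall>x\<in>S. ts x = t x) \<and>
     ck_alg k (M\<lparr>carrier := S\<rparr>) ts"

definition lattice_filter :: "'a mpm \<Rightarrow> 'a set \<Rightarrow> bool" where
  "lattice_filter M F \<longleftrightarrow> F \<subseteq> carrier M \<and> F \<noteq> {} \<and>
     (\<forall>x\<in>F. \<forall>y\<in>carrier M. le M x y \<longrightarrow> y \<in> F) \<and>
     (\<forall>x\<in>F. \<forall>y\<in>F. meet M x y \<in> F)"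

definition c_filter :: "'a mpm \<Rightarrow> ('a \<Rightarrow> 'a) \<Rightarrow> 'a set \<Rightarrow> bool" where
  "c_filter M t F \<longleftrightarrow> lattice_filter M F \<and>
     (\<forall>x\<in>F. triangle M x \<in> F \<and> t x \<in> F)"

definition princ_filter :: "'a mpm \<Rightarrow> 'a \<Rightarrow> 'a set" where
  "princ_filter M a = {x \<in> carrier M. le M a x}"

definition cimp :: "nat \<Rightarrow> 'a mpm \<Rightarrow> ('a \<Rightarrow> 'a) \<Rightarrow> 'a \<Rightarrow> 'a \<Rightarrow> 'a" where
  "cimp k M t a b = foldr (join M) [nabla M (neg M ((t ^^ i) a)). i \<leftarrow> [1..<Suc k]] b"

definition cds :: "nat \<Rightarrow> 'a mpm \<Rightarrow> ('a \<Rightarrow> 'a) \<Rightarrow> 'a set \<Rightarrow> bool" where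
  "cds k M t D \<longleftrightarrow> D \<subseteq> carrier M \<and> one M \<in> D \<and>
     (\<forall>x\<in>D. \<forall>y\<in>carrier M. cimp k M t x y \<in> D \<longrightarrow> y \<in> D)"

text \<open>D(a): the smallest cyclic deductive system containing a.\<close>
definition Dgen :: "nat \<Rightarrow> 'a mpm \<Rightarrow> ('a \<Rightarrow> 'a) \<Rightarrow> 'a \<Rightarrow> 'a set" where
  "Dgen k M t a = \<Inter> {D. cds k M t D \<and> a \<in> D}"

end

theory Submission imports Defs begin

locale mpmL = fixes M :: "'a mpm" assumes mpm: "mpm_alg M"
begin
abbreviation C where "C \<equiv> carrier M"
abbreviation mt (infixl "\<sqinter>" 70) where "x \<sqinter> y \<equiv> meet M x y"
abbreviation jn (infixl "\<squnion>" 65) where "x \<squnion> y \<equiv> join M x y"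
abbreviation lq (infix "\<preceq>" 50) where "x \<preceq> y \<equiv> le M x y"
abbreviation N where "N x \<equiv> neg M x"
abbreviation P where "P x \<equiv> pc M x"
abbreviation Z where "Z \<equiv> zero M"
abbreviation I where "I \<equiv> one M"

lemma bdl: "bdl M" and dm: "demorgan_alg M" using mpm by (auto simp: mpm_alg_def demorgan_alg_def)

lemma cz[simp]: "Z \<in> C" and co[simp]: "I \<in> C" using bdl by (auto simp: bdl_def)
lemma cm[simp]: "x \<in> C \<Longrightarrow> y \<in> C \<Longrightarrow> x \<sqinter> y \<in> C" using bdl by (auto simp: bdl_def)
lemma cj[simp]: "x \<in> C \<Longrightarrow> y \<in> C \<Longrightarrow> x \<squnion> y \<in> C" using bdl by (auto simp: bdl_def)
lemma mc: "x \<in> C \<Longrightarrow> y \<in> C \<Longrightarrow> x \<sqinter> y = y \<sqinter> x" using bdl by (auto simp: bdl_def)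
lemma jc: "x \<in> C \<Longrightarrow> y \<in> C \<Longrightarrow> x \<squnion> y = y \<squnion> x" using bdl by (auto simp: bdl_def)
lemma ma: "x \<in> C \<Longrightarrow> y \<in> C \<Longrightarrow> z \<in> C \<Longrightarrow> x \<sqinter> y \<sqinter> z = x \<sqinter> (y \<sqinter> z)" using bdl by (auto simp: bdl_def)
lemma ja: "x \<in> C \<Longrightarrow> y \<in> C \<Longrightarrow> z \<in> C \<Longrightarrow> x \<squnion> y \<squnion> z = x \<squnion> (y \<squnion> z)" using bdl by (auto simp: bdl_def)
lemma ab1: "x \<in> C \<Longrightarrow> y \<in> C \<Longrightarrow> x \<sqinter> (x \<squnion> y) = x" using bdl by (auto simp: bdl_def)
lemma ab2: "x \<in> C \<Longrightarrow> y \<in> C \<Longrightarrow> x \<squnion> (x \<sqinter> y) = x" using bdl by (auto simp: bdl_def)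
lemma dist: "x \<in> C \<Longrightarrow> y \<in> C \<Longrightarrow> z \<in> C \<Longrightarrow> x \<sqinter> (y \<squnion> z) = (x \<sqinter> y) \<squnion> (x \<sqinter> z)" using bdl by (auto simp: bdl_def)
lemma m0[simp]: "x \<in> C \<Longrightarrow> x \<sqinter> Z = Z" using bdl by (auto simp: bdl_def)
lemma j1[simp]: "x \<in> C \<Longrightarrow> x \<squnion> I = I" using bdl by (auto simp: bdl_def)
lemma cn[simp]: "x \<in> C \<Longrightarrow> N x \<in> C" using dm by (auto simp: demorgan_alg_def)
lemma nn[simp]: "x \<in> C \<Longrightarrow> N (N x) = x" using dm by (auto simp: demorgan_alg_def)
lemma nj: "x \<in> C \<Longrightarrow> y \<in> C \<Longrightarrow> N (x \<squnion> y) = N x \<sqinter> N y" using dm by (auto simp: demorgan_alg_def)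
lemma cp[simp]: "x \<in> C \<Longrightarrow> P x \<in> C" using mpm by (auto simp: mpm_alg_def)
lemma mp[simp]: "x \<in> C \<Longrightarrow> x \<sqinter> P x = Z" using mpm by (auto simp: mpm_alg_def)
lemma pmax: "x \<in> C \<Longrightarrow> y \<in> C \<Longrightarrow> x \<sqinter> y = Z \<Longrightarrow> y \<preceq> P x" using mpm by (auto simp: mpm_alg_def)

lemma mi[simp]: "x \<in> C \<Longrightarrow> x \<sqinter> x = x" using ab1[of x "x \<sqinter> x"] ab2[of x x] by simp
lemma ji[simp]: "x \<in> C \<Longrightarrow> x \<squnion> x = x" using ab1[of x x] ab2[of x "x \<squnion> x"] by simp
lemma m0'[simp]: "x \<in> C \<Longrightarrow> Z \<sqinter> x = Z" using mc[of Z x] by simp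
lemma j1'[simp]: "x \<in> C \<Longrightarrow> I \<squnion> x = I" using jc[of I x] by simp
lemma m1[simp]: "x \<in> C \<Longrightarrow> x \<sqinter> I = x" using ab1[of x I] by simp
lemma m1'[simp]: "x \<in> C \<Longrightarrow> I \<sqinter> x = x" using mc[of I x] by simp
lemma j0[simp]: "x \<in> C \<Longrightarrow> x \<squnion> Z = x" using ab2[of x Z] by simp
lemma j0'[simp]: "x \<in> C \<Longrightarrow> Z \<squnion> x = x" using jc[of Z x] by simp
lemma nm: assumes "x \<in> C" "y \<in> C" shows "N (x \<sqinter> y) = N x \<squnion> N y"
proof -
  have "N (N x \<squnion> N y) = x \<sqinter> y" using nj[of "N x" "N y"] assms by simp
  hence "N (x \<sqinter> y) = N (N (N x \<squnion> N y))" by simp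
  thus ?thesis using assms by simp
qed
lemma n1[simp]: "N I = Z" using nj[of "N Z" I] by simp
lemma n0[simp]: "N Z = I" using nn[of I] by simp
lemma le_j: assumes "x \<in> C" "y \<in> C" shows "x \<preceq> y \<longleftrightarrow> x \<squnion> y = y"
proof
  assume "x \<preceq> y" hence "x \<sqinter> y = x" by (simp add: le_def)
  hence "x \<squnion> y = y \<squnion> (y \<sqinter> x)" using assms jc[of "x \<sqinter> y" y] mc[of x y] by simp
  thus "x \<squnion> y = y" using ab2 assms by simp
next
  assume "x \<squnion> y = y" hence "x \<sqinter> y = x \<sqinter> (x \<squnion> y)" by simp
  thus "x \<preceq> y" using ab1 assms by (simp add: le_def)
qed
lemma le_refl: "x \<in> C \<Longrightarrow> x \<preceq> x" by (simp add: le_def)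
lemma le_trans: assumes "x \<in> C" "y \<in> C" "z \<in> C" "x \<preceq> y" "y \<preceq> z" shows "x \<preceq> z"
proof -
  have "x \<sqinter> z = (x \<sqinter> y) \<sqinter> z" using assms by (simp add: le_def)
  also have "\<dots> = x \<sqinter> (y \<sqinter> z)" using ma assms by simp
  also have "\<dots> = x" using assms by (simp add: le_def)
  finally show ?thesis by (simp add: le_def)
qed
lemma le_anti: "x \<in> C \<Longrightarrow> y \<in> C \<Longrightarrow> x \<preceq> y \<Longrightarrow> y \<preceq> x \<Longrightarrow> x = y"
  unfolding le_def using mc by metis
lemma le_neg: assumes "x \<in> C" "y \<in> C" "x \<preceq> y" shows "N y \<preceq> N x"
proof -
  have "N x = N (x \<sqinter> y)" using assms by (simp add: le_def)
  also have "\<dots> = N x \<squnion> N y" using nm assms by simp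
  finally have "N y \<squnion> N x = N x" using jc[of "N x" "N y"] assms by simp
  thus ?thesis using le_j assms by simp
qed
lemma le_meetI: assumes "x \<in> C" "y \<in> C" "z \<in> C" "z \<preceq> x" "z \<preceq> y" shows "z \<preceq> x \<sqinter> y"
proof -
  have "z \<sqinter> (x \<sqinter> y) = (z \<sqinter> x) \<sqinter> y" using ma assms by simp
  also have "\<dots> = z" using assms by (simp add: le_def)
  finally show ?thesis by (simp add: le_def)
qed
lemma meet_le1: assumes "x \<in> C" "y \<in> C" shows "x \<sqinter> y \<preceq> x"
proof -
  have "(x \<sqinter> y) \<sqinter> x = x \<sqinter> (x \<sqinter> y)" using mc assms by simp
  also have "\<dots> = (x \<sqinter> x) \<sqinter> y" using ma[OF assms(1) assms(1) assms(2)] by (rule sym)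
  finally show ?thesis using assms by (simp add: le_def)
qed
lemma meet_le2: "x \<in> C \<Longrightarrow> y \<in> C \<Longrightarrow> x \<sqinter> y \<preceq> y"
  using meet_le1[of y x] mc[of x y] by simp
lemma join_ge1: "x \<in> C \<Longrightarrow> y \<in> C \<Longrightarrow> x \<preceq> x \<squnion> y"
  unfolding le_def using ab1 by simp
lemma join_ge2: "x \<in> C \<Longrightarrow> y \<in> C \<Longrightarrow> y \<preceq> x \<squnion> y"
  using join_ge1[of y x] jc[of x y] by simp
lemma join_leI: assumes "x \<in> C" "y \<in> C" "z \<in> C" "x \<preceq> z" "y \<preceq> z" shows "x \<squnion> y \<preceq> z"
proof -
  have "(x \<squnion> y) \<squnion> z = x \<squnion> (y \<squnion> z)" using ja assms by simp
  also have "\<dots> = z" using assms le_j by simp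
  finally show ?thesis using le_j assms by simp
qed
lemma le_1: "x \<in> C \<Longrightarrow> x \<preceq> I" by (simp add: le_def)
lemma le_0: "x \<in> C \<Longrightarrow> Z \<preceq> x" by (simp add: le_def)

lemma comp_pc: assumes "z \<in> C" "c \<in> C" "z \<sqinter> c = Z" "z \<squnion> c = I" shows "P z = c"
proof -
  have 1: "c \<preceq> P z" using pmax assms by auto
  have "P z = P z \<sqinter> (z \<squnion> c)" using assms by simp
  also have "\<dots> = P z \<sqinter> c" using assms dist[of "P z" z c] mc[of "P z" z] by simp
  finally have "P z = P z \<sqinter> c" .
  hence "P z \<preceq> c" by (simp add: le_def)
  thus ?thesis using 1 le_anti assms by auto
qed

lemma bool_j: assumes "x \<in> C" "x \<sqinter> N x = Z" shows "x \<squnion> N x = I"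
proof -
  have "N x \<squnion> x = N (x \<sqinter> N x)" using nm[of x "N x"] assms(1) by simp
  also have "\<dots> = I" using assms by simp
  finally show ?thesis using jc[of x "N x"] assms by simp
qed
lemma bool_pc: "x \<in> C \<Longrightarrow> x \<sqinter> N x = Z \<Longrightarrow> P x = N x"
  using bool_j comp_pc by simp

lemma K_iff: assumes "x \<in> C" shows "x = nabla M x \<longleftrightarrow> x \<sqinter> N x = Z"
proof
  assume h: "x = nabla M x"
  hence "N x = N (N (N x \<sqinter> P x))" unfolding nabla_def by simp
  hence e: "N x = N x \<sqinter> P x" using assms by simp
  have "x \<sqinter> N x = x \<sqinter> (N x \<sqinter> P x)" using arg_cong[of _ _ "\<lambda>u. x \<sqinter> u", OF e] .
  also have "\<dots> = x \<sqinter> (P x \<sqinter> N x)" using mc[of "N x" "P x"] assms by simp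
  also have "\<dots> = (x \<sqinter> P x) \<sqinter> N x" using ma[of x "P x" "N x"] assms by (simp del: mp)
  also have "\<dots> = Z" using assms by simp
  finally show "x \<sqinter> N x = Z" .
next
  assume "x \<sqinter> N x = Z"
  thus "x = nabla M x" using assms bool_pc unfolding nabla_def by simp
qed


lemma le_Z: "x \<in> C \<Longrightarrow> x \<preceq> Z \<Longrightarrow> x = Z"
  using le_anti le_0 by simp
lemma meet_mono: assumes "u \<in> C" "v \<in> C" "z \<in> C" "u \<preceq> v" shows "u \<sqinter> z \<preceq> v \<sqinter> z"
proof -
  have "u \<sqinter> z \<preceq> v" using le_trans[OF _ assms(1) assms(2) meet_le1[OF assms(1) assms(3)] assms(4)] assms by simp
  moreover have "u \<sqinter> z \<preceq> z" using meet_le2 assms by simp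
  ultimately show ?thesis using le_meetI assms by simp
qed
lemma nabla_C[simp]: "x \<in> C \<Longrightarrow> nabla M x \<in> C" by (simp add: nabla_def)
lemma tri_eq: "w \<in> C \<Longrightarrow> triangle M w = w \<sqinter> P (N w)" by (simp add: triangle_def nabla_def)
lemma N_tri: "w \<in> C \<Longrightarrow> N (triangle M w) = nabla M (N w)" by (simp add: triangle_def)
lemma L1: assumes "a \<in> C" "w \<in> C" "a \<sqinter> N a = Z" "a \<preceq> w" shows "a \<preceq> triangle M w"
proof -
  have "N w \<preceq> N a" using le_neg assms by simp
  hence "N w \<sqinter> a \<preceq> N a \<sqinter> a" using meet_mono assms by simp
  hence "N w \<sqinter> a = Z" using assms mc[of "N a" a] le_Z by simp
  hence "a \<preceq> P (N w)" using pmax assms by simp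
  thus ?thesis using le_meetI assms tri_eq by simp
qed
lemma L2: assumes "a \<in> C" "b \<in> C" "a \<sqinter> N a = Z" "a \<preceq> b" shows "a \<sqinter> N b = Z"
proof -
  have "N b \<preceq> N a" using le_neg assms by simp
  hence "N b \<sqinter> a \<preceq> N a \<sqinter> a" using meet_mono assms by simp
  thus ?thesis using assms mc[of "N a" a] mc[of "N b" a] le_Z by simp
qed
lemma F1: "set L \<subseteq> C \<Longrightarrow> y \<in> C \<Longrightarrow> foldr (join M) L y \<in> C"
  by (induction L) auto
lemma F2: "set L \<subseteq> C \<Longrightarrow> y \<in> C \<Longrightarrow> a \<in> C \<Longrightarrow> (\<forall>e\<in>set L. a \<sqinter> e = Z) \<Longrightarrow> a \<preceq> foldr (join M) L y \<Longrightarrow> a \<preceq> y"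
proof (induction L)
  case Nil thus ?case by simp
next
  case (Cons e L)
  let ?r = "foldr (join M) L y"
  have rC: "?r \<in> C" using F1 Cons by simp
  have eC: "e \<in> C" using Cons by simp
  have "a = a \<sqinter> (e \<squnion> ?r)" using Cons by (simp add: le_def)
  also have "\<dots> = (a \<sqinter> e) \<squnion> (a \<sqinter> ?r)" using dist rC eC Cons by simp
  also have "\<dots> = a \<sqinter> ?r" using Cons rC by simp
  finally have "a \<preceq> ?r" by (simp add: le_def)
  thus ?case using Cons by simp
qed
lemma F3: "set L \<subseteq> C \<Longrightarrow> y \<in> C \<Longrightarrow> y \<preceq> foldr (join M) L y \<and> (\<forall>e\<in>set L. e \<preceq> foldr (join M) L y)"
proof (induction L)
  case Nil thus ?case by (simp add: le_refl)
next
  case (Cons e L)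
  let ?r = "foldr (join M) L y"
  have rC: "?r \<in> C" using F1 Cons by simp
  have eC: "e \<in> C" using Cons by simp
  have 1: "?r \<preceq> e \<squnion> ?r" using join_ge2 rC eC by simp
  have "y \<preceq> e \<squnion> ?r" using Cons le_trans[OF _ rC _ _ 1] rC eC by simp
  moreover have "\<forall>f\<in>set L. f \<preceq> e \<squnion> ?r" using Cons le_trans[OF _ rC _ _ 1] rC eC by auto
  moreover have "e \<preceq> e \<squnion> ?r" using join_ge1 rC eC by simp
  ultimately show ?case by simp
qed
lemma bool_meet: assumes "x \<in> C" "y \<in> C" "x \<sqinter> N x = Z" "y \<sqinter> N y = Z"
  shows "(x \<sqinter> y) \<sqinter> N (x \<sqinter> y) = Z"
proof -
  have "(x \<sqinter> y) \<sqinter> N (x \<sqinter> y) = ((x \<sqinter> y) \<sqinter> N x) \<squnion> ((x \<sqinter> y) \<sqinter> N y)"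
    using nm dist assms by simp
  moreover have "(x \<sqinter> y) \<sqinter> N x \<preceq> x \<sqinter> N x" using meet_mono[of "x \<sqinter> y" x "N x"] meet_le1[of x y] assms by simp
  moreover have "(x \<sqinter> y) \<sqinter> N y \<preceq> y \<sqinter> N y" using meet_mono[of "x \<sqinter> y" y "N y"] meet_le2[of x y] assms by simp
  ultimately show ?thesis using assms le_Z[of "(x \<sqinter> y) \<sqinter> N x"] le_Z[of "(x \<sqinter> y) \<sqinter> N y"] by simp
qed
lemma bool_join: assumes "x \<in> C" "y \<in> C" "x \<sqinter> N x = Z" "y \<sqinter> N y = Z"
  shows "(x \<squnion> y) \<sqinter> N (x \<squnion> y) = Z"
proof -
  have "(x \<squnion> y) \<sqinter> N (x \<squnion> y) = (N x \<sqinter> N y) \<sqinter> (x \<squnion> y)"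
    using nj mc assms by simp
  also have "\<dots> = ((N x \<sqinter> N y) \<sqinter> x) \<squnion> ((N x \<sqinter> N y) \<sqinter> y)"
    using dist assms by simp
  finally have e: "(x \<squnion> y) \<sqinter> N (x \<squnion> y) = ((N x \<sqinter> N y) \<sqinter> x) \<squnion> ((N x \<sqinter> N y) \<sqinter> y)" .
  have "(N x \<sqinter> N y) \<sqinter> x \<preceq> N x \<sqinter> x" using meet_mono meet_le1 assms by simp
  hence 1: "(N x \<sqinter> N y) \<sqinter> x = Z" using assms le_Z[of "(N x \<sqinter> N y) \<sqinter> x"] mc[of x "N x"] by simp
  have "(N x \<sqinter> N y) \<sqinter> y \<preceq> N y \<sqinter> y" using meet_mono meet_le2 assms by simp
  hence 2: "(N x \<sqinter> N y) \<sqinter> y = Z" using assms le_Z[of "(N x \<sqinter> N y) \<sqinter> y"] mc[of y "N y"] by simp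
  show ?thesis using e 1 2 by simp
qed
lemma upd: "carrier (M\<lparr>carrier := S\<rparr>) = S" "meet (M\<lparr>carrier := S\<rparr>) = meet M"
  "join (M\<lparr>carrier := S\<rparr>) = join M" "neg (M\<lparr>carrier := S\<rparr>) = neg M" "pc (M\<lparr>carrier := S\<rparr>) = pc M"
  "zero (M\<lparr>carrier := S\<rparr>) = zero M" "one (M\<lparr>carrier := S\<rparr>) = one M" by simp_all
lemma bdl_sub: assumes "S \<subseteq> C" "Z \<in> S" "I \<in> S" "\<forall>x\<in>S. \<forall>y\<in>S. x \<sqinter> y \<in> S \<and> x \<squnion> y \<in> S"
  shows "bdl (M\<lparr>carrier := S\<rparr>)"
proof -
  have c: "x \<in> S \<Longrightarrow> x \<in> C" for x using assms(1) by auto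
  show ?thesis unfolding bdl_def
    apply (simp only: upd)
    apply (intro conjI ballI)
    subgoal using assms by simp
    subgoal using assms by simp
    subgoal using assms by simp
    subgoal using assms by simp
    subgoal by (simp add: c mc)
    subgoal by (simp add: c jc)
    subgoal by (simp add: c ma)
    subgoal by (simp add: c ja)
    subgoal by (simp add: c ab1)
    subgoal by (simp add: c ab2)
    subgoal by (simp add: c dist)
    subgoal by (simp add: c)
    subgoal by (simp add: c)
    done
qed
lemma bool_neg: "x \<in> C \<Longrightarrow> x \<sqinter> N x = Z \<Longrightarrow> N x \<sqinter> N (N x) = Z"
  using mc[of x "N x"] by simp

end

locale ckL = mpmL M for M :: "'a mpm" +
  fixes k :: nat and t :: "'a \<Rightarrow> 'a"
  assumes ck: "ck_alg k M t"
begin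
lemma aut: "mpm_aut M t" and k1: "k \<ge> 1" and tk: "\<And>x. x \<in> C \<Longrightarrow> (t ^^ k) x = x"
  using ck by (auto simp: ck_alg_def)
lemma tC[simp]: "x \<in> C \<Longrightarrow> t x \<in> C" using aut unfolding mpm_aut_def by (auto dest: bij_betw_apply)
lemma tm: "x \<in> C \<Longrightarrow> y \<in> C \<Longrightarrow> t (x \<sqinter> y) = t x \<sqinter> t y" using aut unfolding mpm_aut_def by auto
lemma tj: "x \<in> C \<Longrightarrow> y \<in> C \<Longrightarrow> t (x \<squnion> y) = t x \<squnion> t y" using aut unfolding mpm_aut_def by auto
lemma tn: "x \<in> C \<Longrightarrow> t (N x) = N (t x)" using aut unfolding mpm_aut_def by auto
lemma tp: "x \<in> C \<Longrightarrow> t (P x) = P (t x)" using aut unfolding mpm_aut_def by auto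
lemma tz: "t Z = Z" and to: "t I = I" using aut unfolding mpm_aut_def by auto
lemma tpowC[simp]: "x \<in> C \<Longrightarrow> (t ^^ i) x \<in> C" by (induction i) auto
lemma tfix: "t a = a \<Longrightarrow> (t ^^ i) a = a" by (induction i) auto
lemma tmono: "x \<in> C \<Longrightarrow> y \<in> C \<Longrightarrow> x \<preceq> y \<Longrightarrow> t x \<preceq> t y"
  unfolding le_def using tm by metis
lemma tpow_mono: "x \<in> C \<Longrightarrow> y \<in> C \<Longrightarrow> x \<preceq> y \<Longrightarrow> (t ^^ i) x \<preceq> (t ^^ i) y"
  by (induction i) (auto intro: tmono)
lemma cyc: assumes "a \<in> C" "a \<preceq> t a" shows "t a = a"
proof -
  have s: "(t ^^ n) a \<preceq> (t ^^ Suc n) a" for n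
    using tpow_mono[OF assms(1) _ assms(2), of n] assms(1) by (simp add: funpow_swap1)
  have "t a \<preceq> (t ^^ Suc n) a" for n
  proof (induction n)
    case 0 thus ?case using le_refl assms by simp
  next
    case (Suc n) thus ?case using le_trans[OF _ _ _ Suc s[of "Suc n"]] assms by simp
  qed
  moreover obtain m where "k = Suc m" using k1 by (cases k) auto
  ultimately have "t a \<preceq> a" using tk assms by metis
  thus ?thesis using le_anti assms by simp
qed
lemma Kchar: "Kset M t = {x \<in> C. t x = x \<and> x \<sqinter> N x = Z}"
  unfolding Kset_def using K_iff by auto
end

theorem proposition4p4:
  fixes k :: nat and M :: "'a mpm" and t :: "'a \<Rightarrow> 'a"
  assumes "k \<ge> 1" and "ck_alg k M t"
  shows "mpm_subalg M (Kset M t)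
       \<and> boolean_alg (M\<lparr>carrier := Kset M t\<rparr>)
       \<and> (\<forall>S ts. ck_subalg k M t S ts \<longrightarrow> Kset (M\<lparr>carrier := S\<rparr>) ts = Kset M t \<inter> S)
       \<and> (\<forall>a\<in>carrier M. c_filter M t (princ_filter M a) \<longleftrightarrow> a \<in> Kset M t)
       \<and> (\<forall>a\<in>Kset M t. Dgen k M t a = princ_filter M a)"
proof -
  interpret ckL M k t
    using assms(2) by unfold_locales (auto simp: ck_alg_def)
  let ?K = "Kset M t"
  have KC: "?K \<subseteq> C" unfolding Kset_def by auto
  have Kin: "x \<in> ?K \<longleftrightarrow> x \<in> C \<and> t x = x \<and> x \<sqinter> N x = Z" for x using Kchar by auto
  have K0: "Z \<in> ?K" and K1: "I \<in> ?K" using Kin tz to by auto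
  have Km: "x \<in> ?K \<Longrightarrow> y \<in> ?K \<Longrightarrow> x \<sqinter> y \<in> ?K" for x y using Kin bool_meet tm by auto
  have Kj: "x \<in> ?K \<Longrightarrow> y \<in> ?K \<Longrightarrow> x \<squnion> y \<in> ?K" for x y using Kin bool_join tj by auto
  have Kn: "x \<in> ?K \<Longrightarrow> N x \<in> ?K" for x using Kin bool_neg tn by auto
  have Kp: "x \<in> ?K \<Longrightarrow> P x \<in> ?K" for x using Kn bool_pc Kin by auto
  have A: "mpm_subalg M ?K" unfolding mpm_subalg_def using KC K0 K1 Km Kj Kn Kp by auto
  have B: "boolean_alg (M\<lparr>carrier := ?K\<rparr>)"
    unfolding boolean_alg_def
  proof
    show "bdl (M\<lparr>carrier := ?K\<rparr>)" using bdl_sub[OF KC K0 K1] Km Kj by auto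
    show "\<forall>x\<in>carrier (M\<lparr>carrier := ?K\<rparr>). \<exists>y\<in>carrier (M\<lparr>carrier := ?K\<rparr>).
       meet (M\<lparr>carrier := ?K\<rparr>) x y = zero (M\<lparr>carrier := ?K\<rparr>) \<and> join (M\<lparr>carrier := ?K\<rparr>) x y = one (M\<lparr>carrier := ?K\<rparr>)"
      using Kn Kin bool_j by auto
  qed
  have Cc: "\<forall>S ts. ck_subalg k M t S ts \<longrightarrow> Kset (M\<lparr>carrier := S\<rparr>) ts = ?K \<inter> S"
    by (auto simp: ck_subalg_def mpm_subalg_def Kset_def nabla_def)
  have D: "c_filter M t (princ_filter M a) \<longleftrightarrow> a \<in> ?K" if aC: "a \<in> C" for a
  proof
    assume cf: "c_filter M t (princ_filter M a)"
    have aF: "a \<in> princ_filter M a" using aC le_refl by (simp add: princ_filter_def)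
    hence "t a \<in> princ_filter M a" "triangle M a \<in> princ_filter M a"
      using cf by (auto simp: c_filter_def)
    hence 1: "a \<preceq> t a" and 2: "a \<preceq> a \<sqinter> P (N a)" using tri_eq aC by (auto simp: princ_filter_def)
    have ta: "t a = a" using cyc 1 aC by simp
    have "a \<preceq> P (N a)" using le_trans[OF _ _ _ 2 meet_le2] aC by simp
    hence "a \<sqinter> N a \<preceq> P (N a) \<sqinter> N a" using meet_mono aC by simp
    hence "a \<sqinter> N a = Z" using le_Z mc[of "P (N a)" "N a"] aC by simp
    thus "a \<in> ?K" using Kin ta aC by simp
  next
    assume aK: "a \<in> ?K"
    hence ta: "t a = a" and ab: "a \<sqinter> N a = Z" using Kin by auto
    show "c_filter M t (princ_filter M a)"
      unfolding c_filter_def lattice_filter_def princ_filter_def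
    proof (intro conjI ballI)
      show "{x \<in> C. a \<preceq> x} \<noteq> {}" using aC le_refl by auto
    next
      fix x y assume "x \<in> {x \<in> C. a \<preceq> x}" "y \<in> C"
      thus "x \<preceq> y \<longrightarrow> y \<in> {x \<in> C. a \<preceq> x}" using le_trans[OF aC, of x y] by simp
    next
      fix x y assume "x \<in> {x \<in> C. a \<preceq> x}" "y \<in> {x \<in> C. a \<preceq> x}"
      thus "x \<sqinter> y \<in> {x \<in> C. a \<preceq> x}" using le_meetI aC by auto
    next
      fix x assume x: "x \<in> {x \<in> C. a \<preceq> x}"
      thus "triangle M x \<in> {x \<in> C. a \<preceq> x}" using L1 aC ab tri_eq by auto
      show "t x \<in> {x \<in> C. a \<preceq> x}" using x tmono[of a x] ta aC by auto
    qed auto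
  qed
  have E: "Dgen k M t a = princ_filter M a" if aK: "a \<in> ?K" for a
  proof -
    have aC: "a \<in> C" and ta: "t a = a" and ab: "a \<sqinter> N a = Z" using aK Kin by auto
    let ?F = "princ_filter M a"
    have Fc: "cds k M t ?F" unfolding cds_def
    proof (intro conjI ballI impI)
      show "?F \<subseteq> C" by (auto simp: princ_filter_def)
      show "I \<in> ?F" using le_1 aC by (simp add: princ_filter_def)
    next
      fix x y assume x: "x \<in> ?F" and y: "y \<in> C" and h: "cimp k M t x y \<in> ?F"
      have xC: "x \<in> C" and ax: "a \<preceq> x" using x by (auto simp: princ_filter_def)
      let ?L = "[nabla M (N ((t ^^ i) x)). i \<leftarrow> [1..<Suc k]]"
      have LC: "set ?L \<subseteq> C" using xC by auto
      have "\<forall>e\<in>set ?L. a \<sqinter> e = Z"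
      proof
        fix e assume "e \<in> set ?L"
        then obtain i where e: "e = nabla M (N ((t ^^ i) x))" by auto
        have "a \<preceq> (t ^^ i) x" using tpow_mono[OF aC xC ax, of i] tfix[OF ta, of i] by simp
        hence "a \<preceq> triangle M ((t ^^ i) x)" using L1 aC ab xC by simp
        hence "a \<sqinter> N (triangle M ((t ^^ i) x)) = Z" using L2 aC ab xC tri_eq by simp
        thus "a \<sqinter> e = Z" using e N_tri xC by simp
      qed
      moreover have "a \<preceq> foldr (join M) ?L y" using h by (simp add: princ_filter_def cimp_def)
      ultimately have "a \<preceq> y" using F2[OF LC y aC] by blast
      thus "y \<in> ?F" using y by (simp add: princ_filter_def)
    qed
    have sub: "?F \<subseteq> D" if D: "cds k M t D" "a \<in> D" for D
    proof
      fix x assume "x \<in> ?F"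
      hence xC: "x \<in> C" and ax: "a \<preceq> x" by (auto simp: princ_filter_def)
      have na: "nabla M (N a) = N a" using K_iff[of "N a"] bool_neg aC ab by simp
      let ?L = "[nabla M (N ((t ^^ i) a)). i \<leftarrow> [1..<Suc k]]"
      have LC: "set ?L \<subseteq> C" using aC by auto
      have "nabla M (N ((t ^^ 1) a)) \<in> set ?L" unfolding set_map by (rule imageI) (use k1 in auto)
      hence "N a \<in> set ?L" using na ta by simp
      hence "N a \<preceq> foldr (join M) ?L x" and "x \<preceq> foldr (join M) ?L x" using F3[OF LC xC] by auto
      moreover have fC: "foldr (join M) ?L x \<in> C" using F1 LC xC by simp
      ultimately have "a \<preceq> foldr (join M) ?L x" "N a \<preceq> foldr (join M) ?L x"
        using le_trans[OF aC xC fC ax] by auto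
      hence "a \<squnion> N a \<preceq> foldr (join M) ?L x" using join_leI aC fC by simp
      hence "I \<preceq> foldr (join M) ?L x" using bool_j[OF aC ab] by simp
      hence "foldr (join M) ?L x = I" using le_anti[OF fC co le_1[OF fC]] by simp
      moreover have "I \<in> D" and mp: "\<forall>x\<in>D. \<forall>y\<in>C. cimp k M t x y \<in> D \<longrightarrow> y \<in> D"
        using D(1) unfolding cds_def by blast+
      ultimately have "cimp k M t a x \<in> D" by (simp add: cimp_def)
      thus "x \<in> D" using mp D(2) xC by blast
    qed
    have "a \<in> ?F" using aC le_refl by (simp add: princ_filter_def)
    hence "?F \<in> {D. cds k M t D \<and> a \<in> D}" using Fc by simp
    hence 1: "Dgen k M t a \<subseteq> ?F" unfolding Dgen_def by (rule Inter_lower)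
    have 2: "?F \<subseteq> Dgen k M t a" unfolding Dgen_def by (rule Inter_greatest) (use sub in auto)
    show ?thesis using 1 2 by (rule equalityI)
  qed
  show ?thesis using A B Cc D E by auto
qed
end
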